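(* Let $d \geq 2$, $n \geq 1$, $\varphi(t) = \frac12 t^2$ and $w_{ij} = 1$ for all $i,j$. If $X \in \mathcal{M}$ is a critical point of $f(X) = \frac14\|X^\top X\|_F^2$ at which the Riemannian Hessian is negative semidefinite, then $\mathrm{rank}(X) < d$.
   Context: $\mathcal{M} = (\mathbb{S}^{d-1})^n$ is the set of $X \in \mathbb{R}^{d\times n}$ with unit-norm columns $x_1,\dots,x_n$, a Riemannian submanifold of $\mathbb{R}^{d\times n}$ with the Frobenius metric; gradient and Hessian are Riemannian. *)

theory Defs
  imports "HOL-Analysis.Analysis"
begin

text \<open>Matrices X in R^(d x n) are of type real^'n^'d (d rows, n columns);
  column j X is the j-th column x_j. The inner product on real^'n^'d is the Frobenius one.\<close>

definition onM :: "real^'n^'d \<Rightarrow> bool" where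
  "onM X \<longleftrightarrow> (\<forall>j. norm (column j X) = 1)"

text \<open>Tangent space of the product of spheres at X.\<close>
definition tangentM :: "real^'n^'d \<Rightarrow> (real^'n^'d) set" where
  "tangentM X = {V. \<forall>j. column j X \<bullet> column j V = 0}"

text \<open>Orthogonal projection onto the tangent space (columnwise), defined for every X.\<close>
definition projM :: "real^'n^'d \<Rightarrow> real^'n^'d \<Rightarrow> real^'n^'d" where
  "projM X Z = (\<chi> i j. Z$i$j - (column j X \<bullet> column j Z) * X$i$j)"

text \<open>Euclidean gradient w.r.t. the Frobenius inner product.\<close>
definition egrad :: "(real^'n^'d \<Rightarrow> real) \<Rightarrow> real^'n^'d \<Rightarrow> real^'n^'d" where
  "egrad f X = (THE G. (f has_derivative (\<lambda>H. G \<bullet> H)) (at X))"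

text \<open>Riemannian gradient on the Riemannian submanifold: projection of the Euclidean gradient.\<close>
definition rgrad :: "(real^'n^'d \<Rightarrow> real) \<Rightarrow> real^'n^'d \<Rightarrow> real^'n^'d" where
  "rgrad f X = projM X (egrad f X)"

text \<open>Riemannian Hessian of a Riemannian submanifold: Hess f(X)[V] = Proj_X (D G(X)[V]),
  where G(Y) = Proj_Y(egrad f Y) is a smooth extension of the Riemannian gradient.\<close>
definition rhess :: "(real^'n^'d \<Rightarrow> real) \<Rightarrow> real^'n^'d \<Rightarrow> real^'n^'d \<Rightarrow> real^'n^'d" where
  "rhess f X V = projM X (frechet_derivative (rgrad f) (at X) V)"

definition crit_point :: "(real^'n^'d \<Rightarrow> real) \<Rightarrow> real^'n^'d \<Rightarrow> bool" where
  "crit_point f X \<longleftrightarrow> onM X \<and> rgrad f X = 0"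

definition hess_nsd :: "(real^'n^'d \<Rightarrow> real) \<Rightarrow> real^'n^'d \<Rightarrow> bool" where
  "hess_nsd f X \<longleftrightarrow> (\<forall>V\<in>tangentM X. rhess f X V \<bullet> V \<le> 0)"

text \<open>f(X) = 1/4 ||X^T X||_F^2 (i.e. phi(t) = t^2/2, w_ij = 1).\<close>
definition fquart :: "real^'n^'d \<Rightarrow> real" where
  "fquart X = (1/4) * (norm (transpose X ** X))^2"

end

theory Submission
  imports Defs
begin


lemma bb_mm: "bounded_bilinear ((**) :: real^'n^'m \<Rightarrow> real^'p^'n \<Rightarrow> real^'p^'m)"
  unfolding bilinear_conv_bounded_bilinear[symmetric] bilinear_def
  by (auto intro!: linearI simp: matrix_add_ldistrib matrix_scalar_ac scalar_matrix_assoc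
        vec_eq_iff matrix_matrix_mult_def sum.distrib algebra_simps sum_distrib_left)

lemma bl_transpose: "bounded_linear (transpose :: real^'n^'m \<Rightarrow> real^'m^'n)"
  by (rule linear_conv_bounded_linear[THEN iffD1]) (auto intro!: linearI simp: vec_eq_iff transpose_def)

definition cinner :: "real^'n^'d \<Rightarrow> real^'n^'d \<Rightarrow> real^'n" where
  "cinner Y Z = (\<chi> j. column j Y \<bullet> column j Z)"

definition cscale :: "real^'n \<Rightarrow> real^'n^'d \<Rightarrow> real^'n^'d" where
  "cscale c Y = (\<chi> i j. c$j * Y$i$j)"

lemma bb_cinner: "bounded_bilinear cinner"
  unfolding bilinear_conv_bounded_bilinear[symmetric] bilinear_def
  by (auto intro!: linearI simp: cinner_def vec_eq_iff column_def inner_vec_def sum.distrib algebra_simps sum_distrib_left)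

lemma bb_cscale: "bounded_bilinear cscale"
  unfolding bilinear_conv_bounded_bilinear[symmetric] bilinear_def
  by (auto intro!: linearI simp: cscale_def vec_eq_iff algebra_simps)

lemma projM_alt: "projM X Z = Z - cscale (cinner X Z) X"
  by (simp add: projM_def cscale_def cinner_def vec_eq_iff)

lemma inner_mm_left: "((A::real^'n^'m) ** B) \<bullet> (C::real^'p^'m) = B \<bullet> (transpose A ** C)"
proof -
  have "((A::real^'n^'m) ** B) \<bullet> C = (\<Sum>i\<in>UNIV. \<Sum>j\<in>UNIV. \<Sum>k\<in>UNIV. A$i$k * B$k$j * C$i$j)"
    by (simp add: inner_vec_def matrix_matrix_mult_def sum_distrib_right)
  also have "\<dots> = (\<Sum>i\<in>UNIV. \<Sum>k\<in>UNIV. \<Sum>j\<in>UNIV. A$i$k * B$k$j * C$i$j)"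
    by (rule sum.cong[OF refl], rule sum.swap)
  also have "\<dots> = (\<Sum>k\<in>UNIV. \<Sum>i\<in>UNIV. \<Sum>j\<in>UNIV. A$i$k * B$k$j * C$i$j)"
    by (rule sum.swap)
  also have "\<dots> = (\<Sum>k\<in>UNIV. \<Sum>j\<in>UNIV. \<Sum>i\<in>UNIV. A$i$k * B$k$j * C$i$j)"
    by (rule sum.cong[OF refl], rule sum.swap)
  also have "\<dots> = B \<bullet> (transpose A ** C)"
    by (simp add: inner_vec_def matrix_matrix_mult_def transpose_def sum_distrib_left mult_ac)
  finally show ?thesis .
qed

lemma inner_mm_right: "((A::real^'n^'m) ** B) \<bullet> (C::real^'p^'m) = A \<bullet> (C ** transpose B)"
proof -
  have "((A::real^'n^'m) ** B) \<bullet> C = (\<Sum>i\<in>UNIV. \<Sum>j\<in>UNIV. \<Sum>k\<in>UNIV. A$i$k * B$k$j * C$i$j)"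
    by (simp add: inner_vec_def matrix_matrix_mult_def sum_distrib_right)
  also have "\<dots> = (\<Sum>i\<in>UNIV. \<Sum>k\<in>UNIV. \<Sum>j\<in>UNIV. A$i$k * B$k$j * C$i$j)"
    by (rule sum.cong[OF refl], rule sum.swap)
  also have "\<dots> = A \<bullet> (C ** transpose B)"
    by (simp add: inner_vec_def matrix_matrix_mult_def transpose_def sum_distrib_left mult_ac)
  finally show ?thesis .
qed

lemma inner_comm': "(x::'a::real_inner) \<bullet> y = y \<bullet> x" by (rule inner_commute)

lemma fquart_alt: "fquart = (\<lambda>Y. (1/4) * ((transpose Y ** Y) \<bullet> (transpose Y ** Y)))"
  by (auto simp: fquart_def power2_norm_eq_inner)

lemma transpose_sym: "transpose (transpose Y ** Y) = transpose Y ** (Y::real^'n^'d)"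
  by (simp add: matrix_transpose_mul)

lemma fquart_deriv:
  "(fquart has_derivative (\<lambda>H. (Y ** (transpose Y ** Y)) \<bullet> H)) (at (Y::real^'n^'d))"
proof -
  let ?M = "transpose Y ** Y"
  have d: "((\<lambda>Y. transpose Y ** Y) has_derivative (\<lambda>H. transpose Y ** H + transpose H ** Y)) (at Y)"
    by (rule bounded_bilinear.FDERIV[OF bb_mm, THEN has_derivative_eq_rhs])
       (auto intro!: bounded_linear.has_derivative[OF bl_transpose] has_derivative_ident simp: add.commute)
  have e: "(fquart has_derivative (\<lambda>H. (1/4) * (?M \<bullet> (transpose Y ** H + transpose H ** Y)
        + (transpose Y ** H + transpose H ** Y) \<bullet> ?M))) (at Y)"
    unfolding fquart_alt
    by (intro has_derivative_mult_right bounded_bilinear.FDERIV[OF bounded_bilinear_inner] d)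
  show ?thesis
  proof (rule has_derivative_eq_rhs[OF e], rule ext)
    fix H :: "real^'n^'d"
    have 1: "(transpose Y ** H) \<bullet> ?M = H \<bullet> (Y ** ?M)"
      by (simp add: inner_mm_left)
    have 2: "(transpose H ** Y) \<bullet> ?M = H \<bullet> (Y ** ?M)"
    proof -
      have "(transpose H ** Y) \<bullet> ?M = Y \<bullet> (H ** ?M)" by (simp add: inner_mm_left)
      also have "\<dots> = (H ** ?M) \<bullet> Y" by (rule inner_commute)
      also have "\<dots> = H \<bullet> (Y ** transpose ?M)" by (rule inner_mm_right)
      finally show ?thesis by (simp only: transpose_sym)
    qed
    show "(1/4) * (?M \<bullet> (transpose Y ** H + transpose H ** Y) + (transpose Y ** H + transpose H ** Y) \<bullet> ?M)
      = (Y ** ?M) \<bullet> H"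
    proof -
      have 3: "?M \<bullet> (transpose Y ** H + transpose H ** Y) = (transpose Y ** H + transpose H ** Y) \<bullet> ?M"
        by (rule inner_commute)
      have 4: "H \<bullet> (Y ** ?M) = (Y ** ?M) \<bullet> H" by (rule inner_commute)
      have 5: "1/4 * (a+a+(a+a)) = a" for a :: real by simp
      show ?thesis unfolding 3 inner_add_left 1 2 4 5 ..
    qed
  qed
qed

lemma egrad_fquart: "egrad fquart Y = (Y::real^'n^'d) ** (transpose Y ** Y)"
  unfolding egrad_def
proof (rule the_equality)
  show "(fquart has_derivative (\<bullet>) (Y ** (transpose Y ** Y))) (at Y)"
    by (rule fquart_deriv)
next
  fix G assume a: "(fquart has_derivative (\<bullet>) G) (at Y)"
  have "(\<bullet>) G = (\<lambda>H. (Y ** (transpose Y ** Y)) \<bullet> H)"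
    by (rule has_derivative_unique[OF a fquart_deriv[of Y]])
  hence "G \<bullet> (G - Y ** (transpose Y ** Y)) = (Y ** (transpose Y ** Y)) \<bullet> (G - Y ** (transpose Y ** Y))"
    by (rule fun_cong)
  hence "(G - Y ** (transpose Y ** Y)) \<bullet> (G - Y ** (transpose Y ** Y)) = 0"
    unfolding inner_diff_left[of G] by linarith
  thus "G = Y ** (transpose Y ** Y)" by (simp only: inner_eq_zero_iff right_minus_eq)
qed

lemma rgrad_fquart: "rgrad fquart = (\<lambda>Y::real^'n^'d. Y ** (transpose Y ** Y) - cscale (cinner Y (Y ** (transpose Y ** Y))) Y)"
  by (rule ext) (simp only: rgrad_def egrad_fquart projM_alt)


lemma cscale_inner: "cscale c Y \<bullet> Z = (\<Sum>j\<in>UNIV. c$j * (column j Y \<bullet> column j (Z::real^'n^'d)))"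
proof -
  have "cscale c Y \<bullet> Z = (\<Sum>i\<in>UNIV. \<Sum>j\<in>UNIV. c$j * (Y$i$j * Z$i$j))"
    by (simp add: cscale_def inner_vec_def mult.assoc)
  also have "\<dots> = (\<Sum>j\<in>UNIV. \<Sum>i\<in>UNIV. c$j * (Y$i$j * Z$i$j))" by (rule sum.swap)
  also have "\<dots> = (\<Sum>j\<in>UNIV. c$j * (column j Y \<bullet> column j Z))"
    by (simp add: column_def inner_vec_def sum_distrib_left)
  finally show ?thesis .
qed

lemma D_deriv: "((\<lambda>Y. Y ** (transpose Y ** Y)) has_derivative
   (\<lambda>H. Y ** (transpose Y ** H + transpose H ** Y) + H ** (transpose Y ** Y))) (at (Y::real^'n^'d))"
proof -
  have d: "((\<lambda>Y. transpose Y ** Y) has_derivative (\<lambda>H. transpose Y ** H + transpose H ** Y)) (at Y)"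
    by (rule bounded_bilinear.FDERIV[OF bb_mm bounded_linear.has_derivative[OF bl_transpose has_derivative_ident]
          has_derivative_ident])
  show ?thesis
    by (rule bounded_bilinear.FDERIV[OF bb_mm has_derivative_ident d])
qed

lemma G_deriv: "((\<lambda>Y. Y ** (transpose Y ** Y) - cscale (cinner Y (Y ** (transpose Y ** Y))) Y) has_derivative
   (\<lambda>H. (X ** (transpose X ** H + transpose H ** X) + H ** (transpose X ** X))
      - (cscale (cinner X (X ** (transpose X ** X))) H
         + cscale (cinner X (X ** (transpose X ** H + transpose H ** X) + H ** (transpose X ** X))
                   + cinner H (X ** (transpose X ** X))) X))) (at (X::real^'n^'d))"
  by (rule has_derivative_diff[OF D_deriv bounded_bilinear.FDERIV[OF bb_cscale
        bounded_bilinear.FDERIV[OF bb_cinner has_derivative_ident D_deriv] has_derivative_ident]])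

lemma proj_inner_tangent: "V \<in> tangentM X \<Longrightarrow> projM X Z \<bullet> V = Z \<bullet> (V::real^'n^'d)"
  by (simp add: projM_alt inner_diff_left cscale_inner tangentM_def)

lemma hess_quad:
  assumes "V \<in> tangentM X"
  shows "rhess fquart X V \<bullet> V =
    (X ** (transpose X ** V + transpose V ** X) + V ** (transpose X ** X)) \<bullet> V
    - (\<Sum>j\<in>UNIV. (cinner X (X ** (transpose X ** X)))$j * (column j V \<bullet> column j (V::real^'n^'d)))"
proof -
  have fd: "frechet_derivative (rgrad fquart) (at X) = (\<lambda>H. (X ** (transpose X ** H + transpose H ** X) + H ** (transpose X ** X))
      - (cscale (cinner X (X ** (transpose X ** X))) H
         + cscale (cinner X (X ** (transpose X ** H + transpose H ** X) + H ** (transpose X ** X))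
                   + cinner H (X ** (transpose X ** X))) X))"
    unfolding rgrad_fquart by (rule frechet_derivative_at[OF G_deriv, symmetric])
  have t: "\<And>c. (\<Sum>j\<in>UNIV. c$j * (column j X \<bullet> column j V)) = 0"
    using assms by (simp add: tangentM_def)
  show ?thesis
    unfolding rhess_def proj_inner_tangent[OF assms] fd
    by (simp only: inner_diff_left inner_add_left cscale_inner t add_0_right)
qed



lemma psd_lemma:
  fixes x :: "'n::finite \<Rightarrow> real^'d" and lam a :: "'n \<Rightarrow> real"
  assumes crit: "\<And>k. (\<Sum>l\<in>UNIV. (x l \<bullet> x k) *\<^sub>R x l) = lam k *\<^sub>R x k"
    and m: "\<And>k. m \<le> lam k"
  shows "m * ((\<Sum>k\<in>UNIV. a k *\<^sub>R x k) \<bullet> (\<Sum>k\<in>UNIV. a k *\<^sub>R x k))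
     \<le> (\<Sum>l\<in>UNIV. (x l \<bullet> (\<Sum>k\<in>UNIV. a k *\<^sub>R x k))^2)"
proof -
  define w where "w = (\<Sum>k\<in>UNIV. a k *\<^sub>R x k)"
  have sym: "lam k * (x j \<bullet> x k) = lam j * (x j \<bullet> x k)" for j k
  proof -
    have "lam k * (x j \<bullet> x k) = x j \<bullet> (lam k *\<^sub>R x k)" by simp
    also have "\<dots> = (\<Sum>l\<in>UNIV. (x l \<bullet> x k) * (x j \<bullet> x l))"
      by (simp add: crit[symmetric] inner_sum_right)
    also have "\<dots> = (\<Sum>l\<in>UNIV. (x l \<bullet> x j) * (x k \<bullet> x l))"
      by (rule sum.cong) (auto simp: inner_commute)
    also have "\<dots> = x k \<bullet> (lam j *\<^sub>R x j)"
      by (simp add: crit[symmetric] inner_sum_right)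
    also have "\<dots> = lam j * (x j \<bullet> x k)" by (simp add: inner_commute)
    finally show ?thesis .
  qed
  have Sv: "(\<Sum>l\<in>UNIV. (x l \<bullet> w) *\<^sub>R x l) = (\<Sum>k\<in>UNIV. (a k * lam k) *\<^sub>R x k)"
  proof -
    have "(\<Sum>l\<in>UNIV. (x l \<bullet> w) *\<^sub>R x l) = (\<Sum>l\<in>UNIV. \<Sum>k\<in>UNIV. (a k * (x l \<bullet> x k)) *\<^sub>R x l)"
      by (simp add: w_def inner_sum_right scaleR_sum_left)
    also have "\<dots> = (\<Sum>k\<in>UNIV. \<Sum>l\<in>UNIV. (a k * (x l \<bullet> x k)) *\<^sub>R x l)" by (rule sum.swap)
    also have "\<dots> = (\<Sum>k\<in>UNIV. a k *\<^sub>R (\<Sum>l\<in>UNIV. (x l \<bullet> x k) *\<^sub>R x l))"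
      by (simp add: scaleR_sum_right)
    also have "\<dots> = (\<Sum>k\<in>UNIV. (a k * lam k) *\<^sub>R x k)" by (simp add: crit)
    finally show ?thesis .
  qed
  have q: "(\<Sum>l\<in>UNIV. (x l \<bullet> w)^2) = w \<bullet> (\<Sum>l\<in>UNIV. (x l \<bullet> w) *\<^sub>R x l)"
    by (simp add: inner_sum_right power2_eq_square inner_commute)
  have diff: "(\<Sum>l\<in>UNIV. (x l \<bullet> w)^2) - m * (w \<bullet> w)
      = (\<Sum>j\<in>UNIV. \<Sum>k\<in>UNIV. a j * (a k * (lam k - m)) * (x j \<bullet> x k))"
  proof -
    have "(\<Sum>l\<in>UNIV. (x l \<bullet> w)^2) - m * (w \<bullet> w) = w \<bullet> (\<Sum>k\<in>UNIV. (a k * (lam k - m)) *\<^sub>R x k)"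
      unfolding q Sv
      by (simp add: w_def inner_sum_right sum_subtractf[symmetric] algebra_simps sum_distrib_left)
    also have "\<dots> = (\<Sum>j\<in>UNIV. \<Sum>k\<in>UNIV. a j * (a k * (lam k - m)) * (x j \<bullet> x k))"
      by (simp add: w_def inner_sum_right inner_sum_left mult.assoc sum_distrib_left, subst sum.swap, simp add: mult_ac)
    finally show ?thesis .
  qed
  define s where "s k = sqrt (lam k - m)" for k
  define u where "u = (\<Sum>k\<in>UNIV. (a k * s k) *\<^sub>R x k)"
  have uu: "u \<bullet> u = (\<Sum>j\<in>UNIV. \<Sum>k\<in>UNIV. (a j * s j) * (a k * s k) * (x j \<bullet> x k))"
    by (simp add: u_def inner_sum_right inner_sum_left mult.assoc sum_distrib_left, subst sum.swap, simp add: mult_ac)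
  have trm: "a j * (a k * (lam k - m)) * (x j \<bullet> x k) = (a j * s j) * (a k * s k) * (x j \<bullet> x k)" for j k
  proof (cases "x j \<bullet> x k = 0")
    case False
    with sym[of k j] have "lam k = lam j" by simp
    hence hs: "s j * s k = lam k - m" using m[of k] by (simp add: s_def)
    have "(a j * s j) * (a k * s k) * (x j \<bullet> x k) = a j * (a k * (s j * s k)) * (x j \<bullet> x k)"
      by (simp only: mult_ac)
    thus ?thesis by (simp only: hs)
  qed simp
  have "(\<Sum>l\<in>UNIV. (x l \<bullet> w)^2) - m * (w \<bullet> w) = u \<bullet> u"
    unfolding diff uu by (rule sum.cong[OF refl], rule sum.cong[OF refl], rule trm)
  hence "m * (w \<bullet> w) \<le> (\<Sum>l\<in>UNIV. (x l \<bullet> w)^2)" using inner_ge_zero[of u] by linarith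
  thus ?thesis by (simp add: w_def)
qed

lemma L1: "((A::real^'n^'m) ** B) \<bullet> (C::real^'p^'m) = (\<Sum>k\<in>UNIV. \<Sum>b\<in>UNIV. B$k$b * (column k A \<bullet> column b C))"
proof -
  have "(A ** B) \<bullet> C = (\<Sum>i\<in>UNIV. \<Sum>b\<in>UNIV. \<Sum>k\<in>UNIV. A$i$k * B$k$b * C$i$b)"
    by (simp add: inner_vec_def matrix_matrix_mult_def sum_distrib_right)
  also have "\<dots> = (\<Sum>b\<in>UNIV. \<Sum>i\<in>UNIV. \<Sum>k\<in>UNIV. A$i$k * B$k$b * C$i$b)" by (rule sum.swap)
  also have "\<dots> = (\<Sum>b\<in>UNIV. \<Sum>k\<in>UNIV. \<Sum>i\<in>UNIV. A$i$k * B$k$b * C$i$b)"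
    by (rule sum.cong[OF refl], rule sum.swap)
  also have "\<dots> = (\<Sum>k\<in>UNIV. \<Sum>b\<in>UNIV. \<Sum>i\<in>UNIV. A$i$k * B$k$b * C$i$b)" by (rule sum.swap)
  also have "\<dots> = (\<Sum>k\<in>UNIV. \<Sum>b\<in>UNIV. B$k$b * (column k A \<bullet> column b C))"
    by (simp add: inner_vec_def column_def sum_distrib_left mult_ac)
  finally show ?thesis .
qed

lemma L2: "(transpose (A::real^'n^'m) ** (B::real^'p^'m))$k$b = column k A \<bullet> column b B"
  by (simp add: matrix_matrix_mult_def transpose_def column_def inner_vec_def)

lemma mv_sum: "(X::real^'n^'d) *v a = (\<Sum>k\<in>UNIV. a$k *\<^sub>R column k X)"
  by (simp add: vec_eq_iff matrix_vector_mult_def column_def sum_component mult.commute)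

lemma exists_orth:
  fixes v :: "real^'d"
  assumes "CARD('d) \<ge> 2"
  shows "\<exists>w. w \<noteq> 0 \<and> v \<bullet> w = 0"
proof -
  have "\<not> card (UNIV::'d set) \<le> Suc 0" using assms by simp
  then obtain p q :: 'd where pq: "p \<noteq> q" by (auto simp: card_le_Suc0_iff_eq)
  show ?thesis
  proof (cases "v$p = 0 \<and> v$q = 0")
    case True
    have "axis p (1::real) \<noteq> 0" by (simp add: axis_eq_0_iff)
    moreover have "v \<bullet> axis p 1 = 0" using True by (simp add: inner_axis)
    ultimately show ?thesis by blast
  next
    case False
    define w where "w = v$q *\<^sub>R axis p (1::real) - v$p *\<^sub>R axis q 1"
    have "w$p = v$q" "w$q = - v$p" using pq by (simp_all add: w_def axis_def)
    hence "w \<noteq> 0" using False by auto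
    moreover have "v \<bullet> w = 0" by (simp add: w_def inner_diff_right inner_axis)
    ultimately show ?thesis by blast
  qed
qed

theorem mainTheorem18:
  fixes X :: "real^'n^'d"
  assumes "CARD('d) \<ge> 2"
    and "onM X"
    and "crit_point fquart X"
    and "hess_nsd fquart X"
  shows "rank X < CARD('d)"
proof (rule ccontr)
  assume nr: "\<not> rank X < CARD('d)"
  have "rank X = CARD('d)" using rank_bound[of X] nr by linarith
  hence su: "surj ((*v) X)" by (simp add: full_rank_surjective)
  define x where "x j = column j X" for j
  define DX where "DX = X ** (transpose X ** X)"
  define lam where "lam = cinner X DX"
  have unit: "x j \<bullet> x j = 1" for j
    using assms(2) by (simp add: onM_def x_def power2_norm_eq_inner[symmetric])
  have rg0: "DX - cscale lam X = 0"
    using assms(3) by (simp add: crit_point_def rgrad_fquart DX_def lam_def)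
  have critv: "(\<Sum>l\<in>UNIV. (x l \<bullet> x k) *\<^sub>R x l) = lam$k *\<^sub>R x k" for k
  proof -
    have "DX$i$k = lam$k * X$i$k" for i
      using rg0 by (simp add: vec_eq_iff cscale_def)
    moreover have "DX$i$k = (\<Sum>l\<in>UNIV. (x l \<bullet> x k) * X$i$l)" for i
      by (simp add: DX_def matrix_matrix_mult_def transpose_def x_def column_def inner_vec_def mult.commute)
    ultimately show ?thesis
      by (simp add: vec_eq_iff sum_component x_def column_def)
  qed
  obtain j0 where j0: "\<And>k. lam$j0 \<le> lam$k"
  proof -
    have "Min (range (\<lambda>k. lam$k)) \<in> range (\<lambda>k. lam$k)" by (rule Min_in) auto
    then obtain j0 where e: "lam$j0 = Min (range (\<lambda>k. lam$k))" by (metis imageE)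
    have "lam$j0 \<le> lam$k" for k unfolding e by (rule Min_le) auto
    thus ?thesis by (rule that)
  qed
  obtain w0 where w0: "w0 \<noteq> 0" "x j0 \<bullet> w0 = 0" using exists_orth[OF assms(1)] by blast
  obtain a where wa: "w0 = X *v a" using su by (metis surjD)
  have psd: "lam$j0 * (w0 \<bullet> w0) \<le> (\<Sum>l\<in>UNIV. (x l \<bullet> w0)^2)"
    unfolding wa mv_sum x_def[symmetric]
    by (rule psd_lemma[where lam="\<lambda>k. lam$k"], rule critv, rule j0)
  define V :: "real^'n^'d" where "V = (\<chi> i k. if k = j0 then w0$i else 0)"
  have colV: "column k V = (if k = j0 then w0 else 0)" for k
    by (simp add: V_def column_def vec_eq_iff)
  have cVl: "column k V \<bullet> y = (if k = j0 then w0 \<bullet> y else 0)" for k y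
    by (simp add: colV)
  have cVr: "y \<bullet> column k V = (if k = j0 then y \<bullet> w0 else 0)" for k y
    by (simp add: colV)
  have ifz1: "c * (if P then b else 0) = (if P then c * b else 0)" for c b :: real and P by simp
  have ifz2: "(if P then b else 0) * c = (if P then b * c else 0)" for c b :: real and P by simp
  have tV: "V \<in> tangentM X"
    using w0 by (simp add: tangentM_def colV x_def)
  have P1: "(V ** (transpose X ** X)) \<bullet> V = w0 \<bullet> w0"
    by (simp add: L1 L2 unit[unfolded x_def] cVl cVr ifz1 ifz2)
  have P2: "(X ** (transpose X ** V)) \<bullet> V = (\<Sum>l\<in>UNIV. (x l \<bullet> w0)^2)"
    by (simp add: L1 L2 x_def power2_eq_square cVl cVr ifz1 ifz2)
  have P3: "(X ** (transpose V ** X)) \<bullet> V = 0"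
  proof -
    have "w0 \<bullet> column j0 X = 0" "column j0 X \<bullet> w0 = 0" using w0(2) by (simp_all add: x_def inner_commute)
    thus ?thesis by (simp add: L1 L2 cVl cVr ifz1 ifz2)
  qed
  have P4: "(\<Sum>j\<in>UNIV. (cinner X (X ** (transpose X ** X)))$j * (column j V \<bullet> column j V)) = lam$j0 * (w0 \<bullet> w0)"
    by (simp add: lam_def DX_def cVl cVr ifz1 ifz2)
  have "rhess fquart X V \<bullet> V = (\<Sum>l\<in>UNIV. (x l \<bullet> w0)^2) + w0 \<bullet> w0 - lam$j0 * (w0 \<bullet> w0)"
    unfolding hess_quad[OF tV] P4 matrix_add_ldistrib inner_add_left P1 P2 P3 by simp
  also have "\<dots> > 0" using psd w0(1) inner_gt_zero_iff[of w0] by linarith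
  finally have "rhess fquart X V \<bullet> V > 0" .
  moreover have "rhess fquart X V \<bullet> V \<le> 0" using assms(4) tV by (simp add: hess_nsd_def)
  ultimately show False by simp
qed

end
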